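(* Let $\mathcal B$ be a chordal building set on a finite set $S\subset\mathbb N$ of even cardinality $2k$ with no connected component of odd cardinality. Then the map sending an alternating $\mathcal B$-permutation $(x_1x_2\cdots x_{2k})$ to the chain $(\emptyset,\{x_1,x_2\},\{x_1,\dots,x_4\},\dots,\{x_1,\dots,x_{2k}\})$ is a bijection from the set of alternating $\mathcal B$-permutations onto the set of maximal chains of $\widehat{\mathcal P}_{\mathcal B}$ that have no decreasing position (with respect to $\mu_{\mathcal B}$).
   Context: A building set on a finite set $S\subset\mathbb N$ is a collection $\mathcal B$ of nonempty subsets of $S$ containing every singleton $\{i\}$, $i\in S$, such that $I,J\in\mathcal B$ and $I\cap J\neq\emptyset$ imply $I\cup J\in\mathcal B$. Its connected components are the inclusion-maximal elements of $\mathcal B$. For $I\subseteq S$, $\mathcal B|_I=\{J\in\mathcal B:J\subseteq I\}$. $\mathcal B$ is chordal if for every $I=\{i_1<\dots<i_r\}\in\mathcal B$ and every $1<s<r$, $\{i_s,\dots,i_r\}\in\mathcal B$. For a building set $\mathcal B$ on $S$ with $|S|=m$, a $\mathcal B$-permutation is a sequence $(x_1x_2\cdots x_m)$ listing each element of $S$ exactly once such that for each $1\le i\le m$, $x_i$ and $\max\{x_1,\dots,x_i\}$ lie in the same connected component of $\mathcal B|_{\{x_1,\dots,x_i\}}$. It is alternating if $x_1>x_2<x_3>x_4<\cdots$. $\widehat{\mathcal P}_{\mathcal B}=\{I\subseteq S:\ \mathcal B|_I\text{ has no connected component of odd cardinality}\}$, ordered by inclusion; its maximal chains have the form $\emptyset=I_0\subset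 I_1\subset\dots\subset I_k=S$ with $|I_i|=2i$. For a covering pair $I_1\subset I_2$ ($|I_2|=|I_1|+2$), $I_2\setminus I_1$ lies in a single connected component of $\mathcal B|_{I_2}$, denoted $\mathfrak C(I_2;I_1)$. On $\Omega=\mathbb Z\times\mathbb Z$ define $(a_1,a_2)\ge(b_1,b_2)$ iff either $a_1\ge a_2\ge b_1\ge b_2$ or $a_1=b_1\ge a_2\ge b_2$. On $\mathbb Z\times\Omega$ define $(x,\alpha)\succeq(y,\beta)$ iff $x>y$, or $x=y$ and $\alpha\ge\beta$; $\succ$ means $\succeq$ and $\neq$. Set $\mu_{\mathcal B}(I_1,I_2)=\bigl(\max\mathfrak C(I_2;I_1),(\max(I_2\setminus I_1),\min(I_2\setminus I_1))\bigr)$ for covering pairs. A maximal chain $(I_0,\dots,I_k)$ has a decreasing position at $1\le i<k$ if $\mu_{\mathcal B}(I_{i-1},I_i)\succ\mu_{\mathcal B}(I_i,I_{i+1})$. *)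

theory Defs
  imports Main
begin

definition building_set :: "nat set \<Rightarrow> nat set set \<Rightarrow> bool" where
  "building_set S B \<longleftrightarrow>
     (\<forall>I\<in>B. I \<noteq> {} \<and> I \<subseteq> S) \<and> (\<forall>i\<in>S. {i} \<in> B) \<and>
     (\<forall>I\<in>B. \<forall>J\<in>B. I \<inter> J \<noteq> {} \<longrightarrow> I \<union> J \<in> B)"

definition components :: "nat set set \<Rightarrow> nat set set" where
  "components B = {I \<in> B. \<forall>J\<in>B. I \<subseteq> J \<longrightarrow> J = I}"

definition restr :: "nat set set \<Rightarrow> nat set \<Rightarrow> nat set set" where
  "restr B I = {J \<in> B. J \<subseteq> I}"

(* for I = {i_1 < ... < i_r} in B and 1 < s < r, {i_s,...,i_r} in B (positions 1-indexed) *)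
definition chordal :: "nat set set \<Rightarrow> bool" where
  "chordal B \<longleftrightarrow> (\<forall>I\<in>B. \<forall>s. 1 < s \<and> s < card I \<longrightarrow>
       set (drop (s - 1) (sorted_list_of_set I)) \<in> B)"

definition same_component :: "nat set set \<Rightarrow> nat \<Rightarrow> nat \<Rightarrow> bool" where
  "same_component B x y \<longleftrightarrow> (\<exists>C\<in>components B. x \<in> C \<and> y \<in> C)"

definition B_perm :: "nat set \<Rightarrow> nat set set \<Rightarrow> nat list \<Rightarrow> bool" where
  "B_perm S B xs \<longleftrightarrow> distinct xs \<and> set xs = S \<and>
     (\<forall>i < length xs. same_component (restr B (set (take (Suc i) xs)))
                         (xs ! i) (Max (set (take (Suc i) xs))))"

definition alternating :: "nat list \<Rightarrow> bool" where
  "alternating xs \<longleftrightarrow> (\<forall>i. Suc i < length xs \<longrightarrow>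
      (even i \<longrightarrow> xs ! i > xs ! Suc i) \<and> (odd i \<longrightarrow> xs ! i < xs ! Suc i))"

definition Phat :: "nat set \<Rightarrow> nat set set \<Rightarrow> nat set set" where
  "Phat S B = {I. I \<subseteq> S \<and> (\<forall>C\<in>components (restr B I). even (card C))}"

definition is_chain :: "'a set set \<Rightarrow> 'a set set \<Rightarrow> bool" where
  "is_chain P C \<longleftrightarrow> C \<subseteq> P \<and> (\<forall>X\<in>C. \<forall>Y\<in>C. X \<subseteq> Y \<or> Y \<subseteq> X)"

definition is_max_chain :: "'a set set \<Rightarrow> 'a set set \<Rightarrow> bool" where
  "is_max_chain P C \<longleftrightarrow> is_chain P C \<and> (\<forall>D. is_chain P D \<and> C \<subseteq> D \<longrightarrow> D = C)"

definition max_chains_list :: "nat set \<Rightarrow> nat set set \<Rightarrow> nat set list set" where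
  "max_chains_list S B = {cs. sorted_wrt (\<subset>) cs \<and> is_max_chain (Phat S B) (set cs)}"

definition frakC :: "nat set set \<Rightarrow> nat set \<Rightarrow> nat set \<Rightarrow> nat set" where
  "frakC B I2 I1 = (THE C. C \<in> components (restr B I2) \<and> I2 - I1 \<subseteq> C)"

definition omega_ge :: "nat \<times> nat \<Rightarrow> nat \<times> nat \<Rightarrow> bool" where
  "omega_ge a b \<longleftrightarrow> (case a of (a1, a2) \<Rightarrow> case b of (b1, b2) \<Rightarrow>
      (a1 \<ge> a2 \<and> a2 \<ge> b1 \<and> b1 \<ge> b2) \<or> (a1 = b1 \<and> b1 \<ge> a2 \<and> a2 \<ge> b2))"

definition label_ge :: "nat \<times> (nat \<times> nat) \<Rightarrow> nat \<times> (nat \<times> nat) \<Rightarrow> bool" where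
  "label_ge p q \<longleftrightarrow> (case p of (x, \<alpha>) \<Rightarrow> case q of (y, \<beta>) \<Rightarrow>
      x > y \<or> (x = y \<and> omega_ge \<alpha> \<beta>))"

definition label_gt :: "nat \<times> (nat \<times> nat) \<Rightarrow> nat \<times> (nat \<times> nat) \<Rightarrow> bool" where
  "label_gt p q \<longleftrightarrow> label_ge p q \<and> p \<noteq> q"

definition mu :: "nat set set \<Rightarrow> nat set \<Rightarrow> nat set \<Rightarrow> nat \<times> (nat \<times> nat)" where
  "mu B I1 I2 = (Max (frakC B I2 I1), (Max (I2 - I1), Min (I2 - I1)))"

definition has_decreasing_position :: "nat set set \<Rightarrow> nat set list \<Rightarrow> bool" where
  "has_decreasing_position B cs \<longleftrightarrow> (\<exists>i. 1 \<le> i \<and> Suc i < length cs \<and>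
      label_gt (mu B (cs ! (i - 1)) (cs ! i)) (mu B (cs ! i) (cs ! Suc i)))"

definition perm_to_chain :: "nat list \<Rightarrow> nat set list" where
  "perm_to_chain xs = map (\<lambda>i. set (take (2 * i) xs)) [0..<Suc (length xs div 2)]"

end

theory Submission
  imports Defs
begin

locale bs =
  fixes S :: "nat set" and B :: "nat set set"
  assumes finS: "finite S" and bset: "building_set S B"
begin

lemma B_sub: "I \<in> B \<Longrightarrow> I \<subseteq> S" using bset unfolding building_set_def by blast
lemma B_ne: "I \<in> B \<Longrightarrow> I \<noteq> {}" using bset unfolding building_set_def by blast
lemma B_sing: "i \<in> S \<Longrightarrow> {i} \<in> B" using bset unfolding building_set_def by blast
lemma B_un: "I \<in> B \<Longrightarrow> J \<in> B \<Longrightarrow> I \<inter> J \<noteq> {} \<Longrightarrow> I \<union> J \<in> B"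
  using bset unfolding building_set_def by blast

lemma finB: "finite B"
proof -
  have "B \<subseteq> Pow S" using B_sub by blast
  thus ?thesis using finS finite_subset by blast
qed

lemma B_fin: "I \<in> B \<Longrightarrow> finite I" using B_sub finS finite_subset by blast

lemma comp_in:
  assumes "C \<in> components (restr B I)"
  shows "C \<in> B" "C \<subseteq> I" "\<And>J. J \<in> B \<Longrightarrow> J \<subseteq> I \<Longrightarrow> C \<subseteq> J \<Longrightarrow> J = C"
  using assms unfolding components_def restr_def by auto

lemma comp_exists:
  assumes "D \<in> B" "D \<subseteq> I"
  shows "\<exists>C\<in>components (restr B I). D \<subseteq> C"
proof -
  have f: "finite (restr B I)" using finB unfolding restr_def by auto
  have "D \<in> restr B I" using assms unfolding restr_def by auto
  from finite_has_maximal2[OF f this] obtain m where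
    "m \<in> restr B I" "D \<subseteq> m" "\<forall>b\<in>restr B I. m \<subseteq> b \<longrightarrow> m = b" by auto
  thus ?thesis unfolding components_def by auto
qed

lemma comp_absorb:
  assumes "C \<in> components (restr B I)" "D \<in> B" "D \<subseteq> I" "D \<inter> C \<noteq> {}"
  shows "D \<subseteq> C"
proof -
  have "D \<union> C \<in> B" using B_un assms comp_in(1)[OF assms(1)] by blast
  moreover have "D \<union> C \<subseteq> I" using assms comp_in(2)[OF assms(1)] by blast
  ultimately have "D \<union> C = C" using comp_in(3)[OF assms(1)] by blast
  thus ?thesis by blast
qed

lemma comp_unique:
  assumes "C \<in> components (restr B I)" "C' \<in> components (restr B I)" "x \<in> C" "x \<in> C'"
  shows "C = C'"
proof -
  have "C' \<subseteq> C" using comp_absorb[OF assms(1) comp_in(1,2)[OF assms(2)]] assms by blast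
  moreover have "C \<subseteq> C'" using comp_absorb[OF assms(2) comp_in(1,2)[OF assms(1)]] assms by blast
  ultimately show ?thesis by blast
qed

lemma cover:
  assumes "x \<in> I" "I \<subseteq> S"
  shows "\<exists>C\<in>components (restr B I). x \<in> C"
  using comp_exists[of "{x}" I] B_sing assms by blast

lemma same_comp_iff:
  "same_component (restr B I) x y \<longleftrightarrow> (\<exists>D\<in>B. D \<subseteq> I \<and> x \<in> D \<and> y \<in> D)"
proof
  assume "same_component (restr B I) x y"
  then obtain C where C: "C \<in> components (restr B I)" "x \<in> C" "y \<in> C"
    unfolding same_component_def by auto
  show "\<exists>D\<in>B. D \<subseteq> I \<and> x \<in> D \<and> y \<in> D" using comp_in(1,2)[OF C(1)] C(2,3) by blast
next
  assume "\<exists>D\<in>B. D \<subseteq> I \<and> x \<in> D \<and> y \<in> D"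
  then obtain D where "D \<in> B" "D \<subseteq> I" "x \<in> D" "y \<in> D" by auto
  moreover obtain C where "C \<in> components (restr B I)" "D \<subseteq> C" using comp_exists[OF calculation(1,2)] by blast
  ultimately show "same_component (restr B I) x y" unfolding same_component_def by blast
qed

lemma even_part:
  assumes ev: "\<forall>C\<in>components (restr B I). even (card C)" and IS: "I \<subseteq> S"
    and cl: "\<forall>L\<in>components (restr B I). L \<inter> K \<noteq> {} \<longrightarrow> L \<subseteq> K"
  shows "even (card (K \<inter> I))"
proof -
  let ?F = "{L \<in> components (restr B I). L \<subseteq> K}"
  have eq: "K \<inter> I = \<Union>?F"
  proof
    show "K \<inter> I \<subseteq> \<Union>?F"
    proof
      fix x assume x: "x \<in> K \<inter> I"
      then obtain C where C: "C \<in> components (restr B I)" "x \<in> C" using cover IS by blast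
      hence "C \<subseteq> K" using cl x by blast
      thus "x \<in> \<Union>?F" using C by blast
    qed
    show "\<Union>?F \<subseteq> K \<inter> I" using comp_in(2) by blast
  qed
  have pw: "pairwise disjnt ?F"
    unfolding pairwise_def disjnt_def using comp_unique by blast
  have fin: "\<And>A. A \<in> ?F \<Longrightarrow> finite A" using comp_in(1) B_fin by blast
  have "card (K \<inter> I) = sum card ?F" using eq card_Union_disjoint[OF pw fin] by simp
  moreover have "2 dvd sum card ?F" by (rule dvd_sum) (use ev in auto)
  ultimately show ?thesis by simp
qed

lemma comp_closed:
  assumes K: "K \<in> components (restr B J)" and IJ: "I \<subseteq> J"
  shows "\<forall>L\<in>components (restr B I). L \<inter> K \<noteq> {} \<longrightarrow> L \<subseteq> K"
proof (intro ballI impI)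
  fix L assume L: "L \<in> components (restr B I)" "L \<inter> K \<noteq> {}"
  have "L \<subseteq> J" using comp_in(2)[OF L(1)] IJ by blast
  thus "L \<subseteq> K" using comp_absorb[OF K comp_in(1)[OF L(1)]] L(2) by blast
qed

lemma Phat_even:
  assumes "I \<in> Phat S B" shows "even (card I)"
proof -
  have ev: "\<forall>C\<in>components (restr B I). even (card C)" and IS: "I \<subseteq> S"
    using assms unfolding Phat_def by auto
  have "\<forall>L\<in>components (restr B I). L \<inter> I \<noteq> {} \<longrightarrow> L \<subseteq> I"
  proof (intro ballI impI)
    fix L assume "L \<in> components (restr B I)" thus "L \<subseteq> I" using comp_in(2) by blast
  qed
  from even_part[OF ev IS this] show ?thesis by simp
qed

lemma add_pair:
  assumes I: "I \<in> Phat S B" and "a \<notin> I" "b \<notin> I" "a \<noteq> b" "a \<in> S" "b \<in> S"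
    and D: "D \<in> B" "D \<subseteq> insert a (insert b I)" "a \<in> D" "b \<in> D"
  shows "insert a (insert b I) \<in> Phat S B"
proof -
  let ?J = "insert a (insert b I)"
  have IS: "I \<subseteq> S" and evI: "\<forall>C\<in>components (restr B I). even (card C)"
    using I unfolding Phat_def by auto
  have "\<forall>K\<in>components (restr B ?J). even (card K)"
  proof
    fix K assume K: "K \<in> components (restr B ?J)"
    show "even (card K)"
    proof (cases "a \<in> K \<or> b \<in> K")
      case True
      have "D \<subseteq> K" using comp_absorb[OF K D(1,2)] True D by blast
      hence ab: "a \<in> K" "b \<in> K" using D by auto
      have cl: "\<forall>L\<in>components (restr B I). L \<inter> K \<noteq> {} \<longrightarrow> L \<subseteq> K"
        using comp_closed[OF K] by blast
      have e: "even (card (K \<inter> I))" using even_part[OF evI IS cl] .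
      have "K = insert a (insert b (K \<inter> I))" using comp_in(2)[OF K] ab by blast
      moreover have "finite (K \<inter> I)" using IS finS finite_subset by blast
      ultimately have "card K = card (K \<inter> I) + 2" using assms(2,3,4)
        by (metis IntE card_insert_disjoint finite_insert insertE add_2_eq_Suc')
      thus ?thesis using e by simp
    next
      case False
      hence KI: "K \<subseteq> I" using comp_in(2)[OF K] by blast
      have "K \<in> components (restr B I)"
        using comp_in[OF K] KI unfolding components_def restr_def by auto
      thus ?thesis using evI by blast
    qed
  qed
  moreover have "?J \<subseteq> S" using IS assms by auto
  ultimately show ?thesis unfolding Phat_def by blast
qed

lemma Phat_empty: "{} \<in> Phat S B"
  unfolding Phat_def components_def restr_def using B_ne by auto

lemma restr_S: "restr B S = B" unfolding restr_def using B_sub by auto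

lemma frakC_eq:
  assumes "K \<in> components (restr B J)" "J - I \<subseteq> K" "J - I \<noteq> {}"
  shows "frakC B J I = K"
  unfolding frakC_def
proof (rule the_equality)
  show "K \<in> components (restr B J) \<and> J - I \<subseteq> K" using assms by auto
  fix C assume "C \<in> components (restr B J) \<and> J - I \<subseteq> C"
  thus "C = K" using comp_unique assms by blast
qed

lemma pair_comp:
  assumes I: "I \<in> Phat S B" and J: "J \<in> Phat S B" and "I \<subseteq> J" and ab: "J - I = {a, b}" "a \<noteq> b"
  shows "\<exists>K\<in>components (restr B J). {a, b} \<subseteq> K"
proof -
  have IS: "I \<subseteq> S" and evI: "\<forall>C\<in>components (restr B I). even (card C)"
    using I unfolding Phat_def by auto
  have JS: "J \<subseteq> S" and evJ: "\<forall>C\<in>components (restr B J). even (card C)"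
    using J unfolding Phat_def by auto
  have aJ: "a \<in> J" "a \<notin> I" "b \<in> J" "b \<notin> I" using ab by auto
  obtain K where K: "K \<in> components (restr B J)" "a \<in> K" using cover aJ JS by blast
  have "b \<in> K"
  proof (rule ccontr)
    assume nb: "b \<notin> K"
    have cl: "\<forall>L\<in>components (restr B I). L \<inter> K \<noteq> {} \<longrightarrow> L \<subseteq> K"
      using comp_closed[OF K(1) \<open>I \<subseteq> J\<close>] .
    have e: "even (card (K \<inter> I))" using even_part[OF evI IS cl] .
    have "K = insert a (K \<inter> I)" using comp_in(2)[OF K(1)] K(2) nb ab by blast
    moreover have "finite (K \<inter> I)" using IS finS finite_subset by blast
    ultimately have "card K = Suc (card (K \<inter> I))" using aJ
      by (metis IntE card_insert_disjoint)
    moreover have "even (card K)" using evJ K(1) by blast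
    ultimately show False using e by simp
  qed
  thus ?thesis using K by blast
qed

lemma take_notin:
  assumes "distinct xs" "i < length xs" "j \<le> i"
  shows "xs ! i \<notin> set (take j xs)"
proof
  assume "xs ! i \<in> set (take j xs)"
  then obtain p where p: "p < length (take j xs)" "take j xs ! p = xs ! i" by (metis in_set_conv_nth)
  hence "p < j" "p < length xs" "xs ! p = xs ! i" by auto
  hence "p = i" using assms nth_eq_iff_index_eq by blast
  thus False using \<open>p < j\<close> assms by simp
qed

lemma take_step:
  assumes "2 * Suc l \<le> length xs"
  shows "set (take (2 * Suc l) xs) = insert (xs ! (2*l)) (insert (xs ! Suc (2*l)) (set (take (2*l) xs)))"
proof -
  have "take (2 * Suc l) xs = take (2*l) xs @ [xs ! (2*l), xs ! Suc (2*l)]"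
    using assms by (simp add: take_Suc_conv_app_nth)
  thus ?thesis by auto
qed

lemma take_Suc_set:
  assumes "i < length xs"
  shows "set (take (Suc i) xs) = insert (xs ! i) (set (take i xs))"
  using assms by (simp add: take_Suc_conv_app_nth)

lemma card_take: "distinct xs \<Longrightarrow> m \<le> length xs \<Longrightarrow> card (set (take m xs)) = m"
  by (simp add: distinct_card)

end

locale perm = bs +
  fixes xs :: "nat list"
  assumes bp: "B_perm S B xs" and alt: "alternating xs"
begin

lemma dist: "distinct xs" and setxs: "set xs = S"
  using bp unfolding B_perm_def by auto

lemma bpc:
  assumes "i < length xs"
  shows "\<exists>D\<in>B. D \<subseteq> set (take (Suc i) xs) \<and> xs ! i \<in> D \<and> Max (set (take (Suc i) xs)) \<in> D"
  using bp assms unfolding B_perm_def same_comp_iff by blast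

lemma alt_e: "Suc i < length xs \<Longrightarrow> even i \<Longrightarrow> xs ! Suc i < xs ! i"
  using alt unfolding alternating_def by blast
lemma alt_o: "Suc i < length xs \<Longrightarrow> odd i \<Longrightarrow> xs ! i < xs ! Suc i"
  using alt unfolding alternating_def by blast

lemma conn_step:
  assumes l: "2 * Suc l \<le> length xs"
  shows "\<exists>D\<in>B. D \<subseteq> set (take (2 * Suc l) xs) \<and> xs ! (2*l) \<in> D \<and> xs ! Suc (2*l) \<in> D
           \<and> Max (set (take (2 * Suc l) xs)) \<in> D"
proof -
  let ?a = "xs ! (2*l)" and ?b = "xs ! Suc (2*l)"
  let ?P1 = "set (take (Suc (2*l)) xs)" and ?P2 = "set (take (Suc (Suc (2*l))) xs)"
  have i1: "2*l < length xs" and i2: "Suc (2*l) < length xs" using l by auto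
  obtain D1 where D1: "D1 \<in> B" "D1 \<subseteq> ?P1" "?a \<in> D1" "Max ?P1 \<in> D1" using bpc[OF i1] by blast
  obtain D2 where D2: "D2 \<in> B" "D2 \<subseteq> ?P2" "?b \<in> D2" "Max ?P2 \<in> D2" using bpc[OF i2] by blast
  have P2: "?P2 = insert ?b ?P1" using take_Suc_set[OF i2] .
  have aP1: "?a \<in> ?P1" using take_Suc_set[OF i1] by simp
  have ba: "?b < ?a" using alt_e[OF i2] by simp
  have fin: "finite ?P1" by simp
  have "?a \<le> Max ?P1" using aP1 fin by simp
  hence M: "Max ?P2 = Max ?P1" using P2 ba fin aP1
    by (metis Max_insert empty_iff less_imp_le max.absorb2 order.strict_trans2)
  have "D1 \<union> D2 \<in> B" using B_un[OF D1(1) D2(1)] D1(4) D2(4) M by auto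
  moreover have "D1 \<union> D2 \<subseteq> ?P2" using D1(2) D2(2) P2 by auto
  ultimately show ?thesis using D1 D2 by (intro bexI[of _ "D1 \<union> D2"]) (auto simp: numeral_2_eq_2)
qed

lemma prefix_Phat: "2 * l \<le> length xs \<Longrightarrow> set (take (2 * l) xs) \<in> Phat S B"
proof (induction l)
  case 0 thus ?case using Phat_empty by simp
next
  case (Suc l)
  let ?a = "xs ! (2*l)" and ?b = "xs ! Suc (2*l)"
  have IH: "set (take (2 * l) xs) \<in> Phat S B" using Suc by simp
  obtain D where D: "D \<in> B" "D \<subseteq> set (take (2 * Suc l) xs)" "?a \<in> D" "?b \<in> D"
    using conn_step[OF Suc.prems] by blast
  have eq: "set (take (2 * Suc l) xs) = insert ?a (insert ?b (set (take (2*l) xs)))"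
    using take_step[OF Suc.prems] .
  have i1: "2*l < length xs" and i2: "Suc (2*l) < length xs" using Suc.prems by auto
  show ?case unfolding eq
  proof (rule add_pair[OF IH])
    show "?a \<notin> set (take (2*l) xs)" using take_notin[OF dist i1] by simp
    show "?b \<notin> set (take (2*l) xs)" using take_notin[OF dist i2] by simp
    show "?a \<noteq> ?b" using dist i1 i2 nth_eq_iff_index_eq by fastforce
    show "?a \<in> S" "?b \<in> S" using setxs i1 i2 nth_mem by blast+
    show "D \<in> B" "D \<subseteq> insert ?a (insert ?b (set (take (2*l) xs)))" "?a \<in> D" "?b \<in> D"
      using D eq by auto
  qed
qed

lemma diff_step:
  assumes l: "2 * Suc l \<le> length xs"
  shows "set (take (2 * Suc l) xs) - set (take (2*l) xs) = {xs ! (2*l), xs ! Suc (2*l)}"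
    "Max (set (take (2 * Suc l) xs) - set (take (2*l) xs)) = xs ! (2*l)"
    "Min (set (take (2 * Suc l) xs) - set (take (2*l) xs)) = xs ! Suc (2*l)"
proof -
  have i1: "2*l < length xs" and i2: "Suc (2*l) < length xs" using l by auto
  have n1: "xs ! (2*l) \<notin> set (take (2*l) xs)" using take_notin[OF dist i1] by simp
  have n2: "xs ! Suc (2*l) \<notin> set (take (2*l) xs)" using take_notin[OF dist i2] by simp
  show e: "set (take (2 * Suc l) xs) - set (take (2*l) xs) = {xs ! (2*l), xs ! Suc (2*l)}"
    using take_step[OF l] n1 n2 by auto
  have ba: "xs ! Suc (2*l) < xs ! (2*l)" using alt_e[OF i2] by simp
  show "Max (set (take (2 * Suc l) xs) - set (take (2*l) xs)) = xs ! (2*l)"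
    unfolding e using ba by simp
  show "Min (set (take (2 * Suc l) xs) - set (take (2*l) xs)) = xs ! Suc (2*l)"
    unfolding e using ba by simp
qed

lemma mu_step:
  assumes l: "2 * Suc l \<le> length xs"
  shows "mu B (set (take (2*l) xs)) (set (take (2 * Suc l) xs))
         = (Max (set (take (2 * Suc l) xs)), (xs ! (2*l), xs ! Suc (2*l)))"
proof -
  let ?I = "set (take (2*l) xs)" and ?J = "set (take (2 * Suc l) xs)"
  obtain D where D: "D \<in> B" "D \<subseteq> ?J" "xs ! (2*l) \<in> D" "xs ! Suc (2*l) \<in> D" "Max ?J \<in> D"
    using conn_step[OF l] by blast
  obtain K where K: "K \<in> components (restr B ?J)" "D \<subseteq> K" using comp_exists[OF D(1,2)] by blast
  have KJ: "K \<subseteq> ?J" using comp_in(2)[OF K(1)] .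
  have "frakC B ?J ?I = K"
    by (rule frakC_eq[OF K(1)]) (use diff_step(1)[OF l] D K in auto)
  moreover have "Max K = Max ?J"
  proof (rule antisym)
    show "Max K \<le> Max ?J" using KJ K D by (intro Max_mono) auto
    show "Max ?J \<le> Max K" using K D B_fin comp_in(1)[OF K(1)] by (intro Max_ge) auto
  qed
  ultimately show ?thesis unfolding mu_def using diff_step[OF l] by simp
qed

end

context bs begin

end


lemma pc_len: "length (perm_to_chain ys) = Suc (length ys div 2)"
  unfolding perm_to_chain_def by simp

lemma pc_nth: "i < Suc (length ys div 2) \<Longrightarrow> perm_to_chain ys ! i = set (take (2*i) ys)"
  unfolding perm_to_chain_def by (simp del: upt_Suc)

context perm begin

lemma chain_ok:
  assumes len: "length xs = 2*k"
  shows "perm_to_chain xs \<in> max_chains_list S B" "\<not> has_decreasing_position B (perm_to_chain xs)"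
proof -
  let ?cs = "perm_to_chain xs"
  have L: "length ?cs = Suc k" using pc_len len by simp
  have N: "\<And>i. i < Suc k \<Longrightarrow> ?cs ! i = set (take (2*i) xs)" using pc_nth len by simp
  have sorted: "sorted_wrt (\<subset>) ?cs"
    unfolding sorted_wrt_iff_nth_less
  proof (intro allI impI)
    fix i j assume ij: "i < j" "j < length ?cs"
    have sub: "set (take (2*i) xs) \<subseteq> set (take (2*j) xs)" using ij by (intro set_take_subset_set_take) simp
    have i1: "2*i < length xs" using ij L len by simp
    have "xs ! (2*i) \<in> set (take (2*j) xs)" using ij L len by (auto simp: in_set_conv_nth intro!: exI[of _ "2*i"])
    moreover have "xs ! (2*i) \<notin> set (take (2*i) xs)" using take_notin[OF dist i1] by simp
    ultimately show "?cs ! i \<subset> ?cs ! j" using N ij L sub by auto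
  qed
  have inP: "set ?cs \<subseteq> Phat S B"
  proof
    fix X assume "X \<in> set ?cs"
    then obtain i where "i < Suc k" "X = ?cs ! i" using L by (metis in_set_conv_nth)
    thus "X \<in> Phat S B" using N prefix_Phat len by simp
  qed
  have comp: "\<forall>X\<in>set ?cs. \<forall>Y\<in>set ?cs. X \<subseteq> Y \<or> Y \<subseteq> X"
  proof (intro ballI)
    fix X Y assume "X \<in> set ?cs" "Y \<in> set ?cs"
    then obtain i j where "i < Suc k" "X = ?cs ! i" "j < Suc k" "Y = ?cs ! j" using L by (metis in_set_conv_nth)
    hence "X = set (take (2*i) xs)" "Y = set (take (2*j) xs)" using N by auto
    thus "X \<subseteq> Y \<or> Y \<subseteq> X" using set_take_subset_set_take nat_le_linear by (metis mult_le_mono2)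
  qed
  have chain: "is_chain (Phat S B) (set ?cs)" unfolding is_chain_def using inP comp by blast
  have maxc: "\<forall>D. is_chain (Phat S B) D \<and> set ?cs \<subseteq> D \<longrightarrow> D = set ?cs"
  proof (intro allI impI)
    fix D assume D: "is_chain (Phat S B) D \<and> set ?cs \<subseteq> D"
    show "D = set ?cs"
    proof
      show "D \<subseteq> set ?cs"
      proof
        fix X assume X: "X \<in> D"
        have XP: "X \<in> Phat S B" using X D unfolding is_chain_def by blast
        have XS: "X \<subseteq> S" using XP unfolding Phat_def by blast
        have ev: "even (card X)" using Phat_even[OF XP] .
        have cX: "card X \<le> 2*k" using card_mono[OF finS XS] len dist setxs distinct_card by metis
        define n where "n = card X div 2"
        have n: "2*n = card X" "n < Suc k" using ev cX n_def by auto
        have Y: "?cs ! n \<in> set ?cs" using n L by simp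
        have Yeq: "?cs ! n = set (take (2*n) xs)" using N n by simp
        have cY: "card (?cs ! n) = card X" using Yeq card_take[OF dist] n len by simp
        have fX: "finite X" using XS finS finite_subset by blast
        have "X \<subseteq> ?cs ! n \<or> ?cs ! n \<subseteq> X" using D X Y unfolding is_chain_def by blast
        moreover have "finite (?cs ! n)" using Yeq by simp
        ultimately have "X = ?cs ! n" using cY fX card_subset_eq by metis
        thus "X \<in> set ?cs" using Y by simp
      qed
      show "set ?cs \<subseteq> D" using D by blast
    qed
  qed
  show "?cs \<in> max_chains_list S B"
    unfolding max_chains_list_def is_max_chain_def using sorted chain maxc by blast
  show "\<not> has_decreasing_position B ?cs"
  proof
    assume "has_decreasing_position B ?cs"
    then obtain i where i: "1 \<le> i" "Suc i < length ?cs"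
      "label_gt (mu B (?cs ! (i - 1)) (?cs ! i)) (mu B (?cs ! i) (?cs ! Suc i))"
      unfolding has_decreasing_position_def by blast
    obtain l where l: "i = Suc l" using i(1) by (cases i) auto
    have l1: "2 * Suc l \<le> length xs" and l2: "2 * Suc (Suc l) \<le> length xs" using i L len l by auto
    have e1: "mu B (?cs ! (i - 1)) (?cs ! i) = (Max (set (take (2 * Suc l) xs)), (xs ! (2*l), xs ! Suc (2*l)))"
      using mu_step[OF l1] N i L l by simp
    have e2: "mu B (?cs ! i) (?cs ! Suc i) = (Max (set (take (2 * Suc (Suc l)) xs)), (xs ! (2*Suc l), xs ! Suc (2*Suc l)))"
      using mu_step[OF l2] N i L l by (simp del: mult_Suc_right)
    have M: "Max (set (take (2 * Suc l) xs)) \<le> Max (set (take (2 * Suc (Suc l)) xs))"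
      using l1 by (intro Max_mono set_take_subset_set_take) (auto simp: take_Suc_conv_app_nth)
    have bl: "xs ! Suc (2*l) < xs ! (2 * Suc l)" using alt_o[of "Suc (2*l)"] l2 by simp
    have ne: "xs ! (2*l) \<noteq> xs ! (2 * Suc l)" using dist l2 nth_eq_iff_index_eq by fastforce
    show False using i(3) unfolding e1 e2 label_gt_def label_ge_def omega_ge_def using M bl ne by auto
  qed
qed

lemma pair_nth:
  assumes "2 * Suc l \<le> length xs"
  shows "xs ! (2*l) = Max (perm_to_chain xs ! Suc l - perm_to_chain xs ! l)"
        "xs ! Suc (2*l) = Min (perm_to_chain xs ! Suc l - perm_to_chain xs ! l)"
proof -
  have lt: "Suc l < Suc (length xs div 2)" "l < Suc (length xs div 2)" using assms by presburger+
  have "perm_to_chain xs ! Suc l = set (take (2 * Suc l) xs)" "perm_to_chain xs ! l = set (take (2*l) xs)"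
    using pc_nth[OF lt(1)] pc_nth[OF lt(2)] by simp_all
  thus "xs ! (2*l) = Max (perm_to_chain xs ! Suc l - perm_to_chain xs ! l)"
        "xs ! Suc (2*l) = Min (perm_to_chain xs ! Suc l - perm_to_chain xs ! l)"
    using diff_step[OF assms] by simp_all
qed

end


context bs begin

lemma perm_inj:
  assumes x: "B_perm S B xs" "alternating xs" and y: "B_perm S B ys" "alternating ys"
    and k: "card S = 2*k" and eq: "perm_to_chain xs = perm_to_chain ys"
  shows "xs = ys"
proof -
  interpret px: perm S B xs using x by (simp add: perm_def perm_axioms_def bs_axioms)
  interpret py: perm S B ys using y by (simp add: perm_def perm_axioms_def bs_axioms)
  have lx: "length xs = 2*k" using px.dist px.setxs k distinct_card by metis
  have ly: "length ys = 2*k" using py.dist py.setxs k distinct_card by metis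
  show ?thesis
  proof (rule nth_equalityI)
    show "length xs = length ys" using lx ly by simp
    fix j assume j: "j < length xs"
    define l where "l = j div 2"
    have l: "2 * Suc l \<le> length xs" "2 * Suc l \<le> length ys" using j lx ly l_def by presburger+
    show "xs ! j = ys ! j"
    proof (cases "even j")
      case True
      hence "j = 2*l" using l_def by simp
      thus ?thesis using px.pair_nth(1)[OF l(1)] py.pair_nth(1)[OF l(2)] eq by simp
    next
      case False
      hence "j = Suc (2*l)" using l_def by presburger
      thus ?thesis using px.pair_nth(2)[OF l(1)] py.pair_nth(2)[OF l(2)] eq by simp
    qed
  qed
qed

end

locale cbs = bs +
  assumes chord: "chordal B"
begin

lemma tail:
  assumes I: "I \<in> B" and a: "a \<in> I"
  shows "{c \<in> I. a \<le> c} \<in> B"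
proof -
  have fI: "finite I" using B_fin I .
  define xs where "xs = sorted_list_of_set I"
  have so: "sorted_wrt (<) xs" and st: "set xs = I" and len: "length xs = card I"
    using fI unfolding xs_def by (auto simp: strict_sorted_list_of_set)
  obtain j where j: "j < length xs" "xs ! j = a" using a st by (metis in_set_conv_nth)
  have T: "set (drop j xs) = {c \<in> I. a \<le> c}"
  proof
    show "set (drop j xs) \<subseteq> {c \<in> I. a \<le> c}"
    proof
      fix c assume "c \<in> set (drop j xs)"
      then obtain q where q: "q < length (drop j xs)" "drop j xs ! q = c" by (metis in_set_conv_nth)
      hence c: "c = xs ! (j + q)" "j + q < length xs" by auto
      have "a \<le> c"
      proof (cases q)
        case 0 thus ?thesis using c j by simp
      next
        case (Suc r) thus ?thesis using c j sorted_wrt_nth_less[OF so, of j "j+q"] by simp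
      qed
      thus "c \<in> {c \<in> I. a \<le> c}" using c st by auto
    qed
    show "{c \<in> I. a \<le> c} \<subseteq> set (drop j xs)"
    proof
      fix c assume c: "c \<in> {c \<in> I. a \<le> c}"
      then obtain p where p: "p < length xs" "xs ! p = c" using st by (metis (mono_tags, lifting) in_set_conv_nth mem_Collect_eq)
      have "\<not> p < j"
      proof
        assume "p < j"
        hence "xs ! p < xs ! j" using sorted_wrt_nth_less[OF so] j by blast
        thus False using c p j by simp
      qed
      hence "drop j xs ! (p - j) = c" "p - j < length (drop j xs)" using p by auto
      thus "c \<in> set (drop j xs)" by (metis nth_mem)
    qed
  qed
  show ?thesis
  proof (cases "j = 0")
    case True thus ?thesis using T st I by simp
  next
    case False
    show ?thesis
    proof (cases "Suc j = length xs")
      case True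
      have "drop j xs = [a]" using Cons_nth_drop_Suc[OF j(1)] True j by simp
      hence "{c \<in> I. a \<le> c} = {a}" using T by simp
      thus ?thesis using B_sing B_sub I a by auto
    next
      case F2: False
      have "1 < Suc j" "Suc j < card I" using False F2 j len by auto
      have ch: "\<And>I s. I \<in> B \<Longrightarrow> 1 < s \<Longrightarrow> s < card I \<Longrightarrow> set (drop (s - 1) (sorted_list_of_set I)) \<in> B"
        using chord unfolding chordal_def by blast
      have "set (drop (Suc j - 1) (sorted_list_of_set I)) \<in> B"
        by (rule ch[OF I]) fact+
      thus ?thesis using T xs_def by simp
    qed
  qed
qed

lemma graded:
  assumes I: "I \<in> Phat S B" and J: "J \<in> Phat S B" and IJ: "I \<subset> J"
  shows "\<exists>a b. a \<noteq> b \<and> a \<in> J - I \<and> b \<in> J - I \<and> insert a (insert b I) \<in> Phat S B"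
proof -
  have IS: "I \<subseteq> S" and evI: "\<forall>C\<in>components (restr B I). even (card C)"
    using I unfolding Phat_def by auto
  have JS: "J \<subseteq> S" and evJ: "\<forall>C\<in>components (restr B J). even (card C)"
    using J unfolding Phat_def by auto
  obtain x where x: "x \<in> J" "x \<notin> I" using IJ by blast
  obtain K where K: "K \<in> components (restr B J)" "x \<in> K" using cover x JS by blast
  have KB: "K \<in> B" and KJ: "K \<subseteq> J" using comp_in(1,2)[OF K(1)] by auto
  have fK: "finite K" using B_fin KB .
  have e1: "even (card (K \<inter> I))" using even_part[OF evI IS comp_closed[OF K(1)]] IJ by blast
  have e2: "even (card K)" using evJ K(1) by blast
  have cR: "card (K - I) = card K - card (K \<inter> I)" using fK by (simp add: card_Diff_subset_Int)
  have le: "card (K \<inter> I) \<le> card K" using fK by (simp add: card_mono)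
  have evR: "even (card (K - I))" using cR e1 e2 le by simp
  have fR: "finite (K - I)" using fK by simp
  have "card (K - I) \<noteq> 0" using fR K(2) x by auto
  hence c2: "card (K - I) \<ge> 2" using evR by presburger
  define a where "a = Max (K - I)"
  have aR: "a \<in> K - I" using fR c2 a_def by (metis Max_in card.empty not_numeral_le_zero)
  have c1: "card (K - I - {a}) \<ge> 1" using c2 aR fR by simp
  hence ne: "K - I - {a} \<noteq> {}" by (metis card.empty not_one_le_zero)
  define b where "b = Max (K - I - {a})"
  have bR: "b \<in> K - I - {a}" unfolding b_def by (rule Max_in) (use ne fR in auto)
  have ba: "b \<le> a" unfolding a_def using bR fR by (intro Max_ge) auto
  have bmax: "\<And>c. c \<in> K - I - {a} \<Longrightarrow> c \<le> b" unfolding b_def using fR by (intro Max_ge) auto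
  have T: "{c \<in> K. b \<le> c} \<in> B" using tail[OF KB] bR by blast
  have Tsub: "{c \<in> K. b \<le> c} \<subseteq> insert a (insert b I)"
  proof
    fix c assume c: "c \<in> {c \<in> K. b \<le> c}"
    show "c \<in> insert a (insert b I)"
    proof (cases "c \<in> I \<or> c = a")
      case True thus ?thesis by auto
    next
      case False
      hence "c \<in> K - I - {a}" using c by auto
      hence "c \<le> b" by (rule bmax)
      thus ?thesis using c by auto
    qed
  qed
  have "insert a (insert b I) \<in> Phat S B"
  proof (rule add_pair[OF I _ _ _ _ _ T Tsub])
    show "a \<notin> I" "b \<notin> I" "a \<noteq> b" using aR bR by auto
    show "a \<in> S" "b \<in> S" using aR bR KJ JS by auto
    show "a \<in> {c \<in> K. b \<le> c}" using aR ba by auto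
    show "b \<in> {c \<in> K. b \<le> c}" using bR by auto
  qed
  moreover have "a \<noteq> b \<and> a \<in> J - I \<and> b \<in> J - I" using aR bR KJ by auto
  ultimately show ?thesis by blast
qed

end


locale mainl = cbs +
  fixes k :: nat and cs :: "nat set list"
  assumes cardS: "card S = 2*k" and evS: "\<forall>C\<in>components B. even (card C)"
    and csm: "cs \<in> max_chains_list S B" and nd: "\<not> has_decreasing_position B cs"
begin

lemma Phat_S: "S \<in> Phat S B"
  unfolding Phat_def using restr_S evS by auto

lemma cs_sorted: "sorted_wrt (\<subset>) cs" and cs_chain: "is_chain (Phat S B) (set cs)"
  and cs_max: "\<And>D. is_chain (Phat S B) D \<Longrightarrow> set cs \<subseteq> D \<Longrightarrow> D = set cs"
  using csm unfolding max_chains_list_def is_max_chain_def by auto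

lemma mc_in: "i < length cs \<Longrightarrow> cs ! i \<in> Phat S B"
  using cs_chain unfolding is_chain_def by auto

lemma mc_lt: "i < j \<Longrightarrow> j < length cs \<Longrightarrow> cs ! i \<subset> cs ! j"
  using sorted_wrt_nth_less[OF cs_sorted] by blast

lemma mc_le: "i \<le> j \<Longrightarrow> j < length cs \<Longrightarrow> cs ! i \<subseteq> cs ! j"
  using mc_lt[of i j] by (cases "i = j") auto

lemma mc_max:
  assumes X: "X \<in> Phat S B" and cmp: "\<And>Y. Y \<in> set cs \<Longrightarrow> X \<subseteq> Y \<or> Y \<subseteq> X"
  shows "X \<in> set cs"
proof -
  have "is_chain (Phat S B) (insert X (set cs))"
    using cs_chain X cmp unfolding is_chain_def by auto
  hence "insert X (set cs) = set cs" using cs_max by blast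
  thus ?thesis by blast
qed

lemma mc_sub_S: "i < length cs \<Longrightarrow> cs ! i \<subseteq> S"
  using mc_in unfolding Phat_def by blast

lemma mc_fin: "i < length cs \<Longrightarrow> finite (cs ! i)"
  using mc_sub_S finS finite_subset by blast

lemma mc_ne: "cs \<noteq> []" and mc0: "cs ! 0 = {}"
proof -
  have "{} \<in> set cs" by (rule mc_max[OF Phat_empty]) auto
  then obtain p where p: "p < length cs" "cs ! p = {}" by (metis in_set_conv_nth)
  thus "cs \<noteq> []" by auto
  show "cs ! 0 = {}"
  proof (cases p)
    case 0 thus ?thesis using p by simp
  next
    case (Suc q) thus ?thesis using mc_lt[of 0 p] p by auto
  qed
qed

lemma mc_last: "cs ! (length cs - 1) = S"
proof -
  have "S \<in> set cs" by (rule mc_max[OF Phat_S]) (use mc_sub_S in \<open>auto simp: in_set_conv_nth\<close>)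
  then obtain p where p: "p < length cs" "cs ! p = S" by (metis in_set_conv_nth)
  show ?thesis
  proof (cases "p = length cs - 1")
    case True thus ?thesis using p by simp
  next
    case False
    hence "cs ! p \<subset> cs ! (length cs - 1)" using p by (intro mc_lt) auto
    moreover have "cs ! (length cs - 1) \<subseteq> S" using mc_sub_S p by auto
    ultimately show ?thesis using p by auto
  qed
qed

lemma mc_step:
  assumes i: "Suc i < length cs"
  shows "card (cs ! Suc i - cs ! i) = 2"
proof (rule ccontr)
  assume ne2: "card (cs ! Suc i - cs ! i) \<noteq> 2"
  let ?I = "cs ! i" and ?J = "cs ! Suc i"
  have IP: "?I \<in> Phat S B" and JP: "?J \<in> Phat S B" using mc_in i by auto
  have IJ: "?I \<subset> ?J" using mc_lt i by auto
  have fJ: "finite ?J" using mc_sub_S i finS finite_subset by blast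
  have cd: "card (?J - ?I) = card ?J - card ?I" using IJ fJ by (meson card_Diff_subset finite_subset psubset_imp_subset)
  have lt: "card ?I < card ?J" using IJ fJ psubset_card_mono by blast
  have "even (card ?J - card ?I)" using Phat_even[OF IP] Phat_even[OF JP] lt by simp
  hence c4: "card ?J \<ge> card ?I + 4" using ne2 cd lt by presburger
  obtain a b where ab: "a \<noteq> b" "a \<in> ?J - ?I" "b \<in> ?J - ?I" "insert a (insert b ?I) \<in> Phat S B"
    using graded[OF IP JP IJ] by blast
  let ?X = "insert a (insert b ?I)"
  have fI: "finite ?I" using IJ fJ finite_subset by blast
  have cX: "card ?X = card ?I + 2" using ab fI by simp
  have XJ: "?X \<subseteq> ?J" using ab IJ by auto
  have "?X \<in> set cs"
  proof (rule mc_max[OF ab(4)])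
    fix Y assume "Y \<in> set cs"
    then obtain q where q: "q < length cs" "Y = cs ! q" by (metis in_set_conv_nth)
    show "?X \<subseteq> Y \<or> Y \<subseteq> ?X"
    proof (cases "q \<le> i")
      case True thus ?thesis using mc_le[of q i] q i by auto
    next
      case False thus ?thesis using mc_le[of "Suc i" q] q XJ by auto
    qed
  qed
  then obtain p where p: "p < length cs" "cs ! p = ?X" by (metis in_set_conv_nth)
  show False
  proof (cases "p \<le> i")
    case True
    hence "?X \<subseteq> ?I" using mc_le[of p i] p i by auto
    thus False using ab by auto
  next
    case False
    hence "?J \<subseteq> ?X" using mc_le[of "Suc i" p] p by auto
    hence "card ?J \<le> card ?X" using fI by (simp add: card_mono)
    thus False using cX c4 by simp
  qed
qed

lemma mc_card: "i < length cs \<Longrightarrow> card (cs ! i) = 2*i"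
proof (induction i)
  case 0 thus ?case using mc0 by simp
next
  case (Suc i)
  have sub: "cs ! i \<subseteq> cs ! Suc i" using mc_le Suc.prems by auto
  have fJ: "finite (cs ! Suc i)" using mc_sub_S Suc.prems finS finite_subset by blast
  have "card (cs ! Suc i - cs ! i) = card (cs ! Suc i) - card (cs ! i)"
    using sub fJ by (meson card_Diff_subset finite_subset)
  moreover have "card (cs ! i) \<le> card (cs ! Suc i)" using sub fJ card_mono by blast
  ultimately show ?case using mc_step[OF Suc.prems] Suc by simp
qed

lemma mc_len: "length cs = Suc k"
proof -
  have "card (cs ! (length cs - 1)) = 2 * (length cs - 1)" using mc_card mc_ne by simp
  thus ?thesis using mc_last cardS mc_ne by (cases cs) auto
qed

lemma mc_k: "cs ! k = S" using mc_last mc_len by simp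

definition a :: "nat \<Rightarrow> nat" where "a i = Max (cs ! Suc i - cs ! i)"
definition b :: "nat \<Rightarrow> nat" where "b i = Min (cs ! Suc i - cs ! i)"
definition K :: "nat \<Rightarrow> nat set" where "K i = frakC B (cs ! Suc i) (cs ! i)"

lemma D_facts:
  assumes i: "i < k"
  shows "cs ! Suc i - cs ! i = {a i, b i}" "b i < a i"
    "cs ! Suc i = insert (a i) (insert (b i) (cs ! i))" "a i \<notin> cs ! i" "b i \<notin> cs ! i"
proof -
  have "card (cs ! Suc i - cs ! i) = 2" using mc_step i mc_len by simp
  then obtain x y where xy: "cs ! Suc i - cs ! i = {x, y}" "x < y"
    by (metis card_2_iff linorder_neqE_nat insert_commute)
  hence ab: "a i = y" "b i = x" unfolding a_def b_def by auto
  show e: "cs ! Suc i - cs ! i = {a i, b i}" using xy ab by auto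
  show "b i < a i" using xy ab by simp
  have "cs ! i \<subseteq> cs ! Suc i" using mc_le i mc_len by simp
  thus "cs ! Suc i = insert (a i) (insert (b i) (cs ! i))" using e by auto
  show "a i \<notin> cs ! i" "b i \<notin> cs ! i" using e by auto
qed

lemma K_facts:
  assumes i: "i < k"
  shows "K i \<in> components (restr B (cs ! Suc i))" "a i \<in> K i" "b i \<in> K i"
    "K i \<in> B" "K i \<subseteq> cs ! Suc i"
    "mu B (cs ! i) (cs ! Suc i) = (Max (K i), (a i, b i))"
proof -
  have IP: "cs ! i \<in> Phat S B" and JP: "cs ! Suc i \<in> Phat S B" using mc_in i mc_len by auto
  have sub: "cs ! i \<subseteq> cs ! Suc i" using mc_le i mc_len by simp
  obtain C where C: "C \<in> components (restr B (cs ! Suc i))" "{a i, b i} \<subseteq> C"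
    using pair_comp[OF IP JP sub D_facts(1)[OF i]] D_facts(2)[OF i] by auto
  have "K i = C" unfolding K_def by (rule frakC_eq[OF C(1)]) (use C D_facts(1)[OF i] in auto)
  thus "K i \<in> components (restr B (cs ! Suc i))" "a i \<in> K i" "b i \<in> K i"
    "K i \<in> B" "K i \<subseteq> cs ! Suc i" using C comp_in(1,2)[OF C(1)] by auto
  show "mu B (cs ! i) (cs ! Suc i) = (Max (K i), (a i, b i))"
    unfolding mu_def K_def[symmetric] using D_facts(1,2)[OF i] unfolding a_def b_def by simp
qed

lemma nd_at:
  assumes "Suc i < k"
  shows "\<not> label_gt (Max (K i), (a i, b i)) (Max (K (Suc i)), (a (Suc i), b (Suc i)))"
proof
  assume g: "label_gt (Max (K i), (a i, b i)) (Max (K (Suc i)), (a (Suc i), b (Suc i)))"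
  have "has_decreasing_position B cs"
    unfolding has_decreasing_position_def
  proof (intro exI[of _ "Suc i"] conjI)
    show "1 \<le> Suc i" by simp
    show "Suc (Suc i) < length cs" using assms mc_len by simp
    show "label_gt (mu B (cs ! (Suc i - 1)) (cs ! Suc i)) (mu B (cs ! Suc i) (cs ! Suc (Suc i)))"
      using g K_facts(6)[of i] K_facts(6)[of "Suc i"] assms by simp
  qed
  thus False using nd by simp
qed

lemma Kmono: "Suc i < k \<Longrightarrow> Max (K i) \<le> Max (K (Suc i))"
  using nd_at unfolding label_gt_def label_ge_def by fastforce

lemma Kmono2: "j \<le> i \<Longrightarrow> i < k \<Longrightarrow> Max (K j) \<le> Max (K i)"
  by (rule lift_Suc_mono_le_ivl[of "{m. Suc m < k}"]) (auto intro: Kmono)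

lemma first_entry:
  "m \<in> cs ! Suc i \<Longrightarrow> i < k \<Longrightarrow> \<exists>j\<le>i. m \<in> cs ! Suc j \<and> m \<notin> cs ! j"
proof (induction i)
  case 0 thus ?case using mc0 by auto
next
  case (Suc i)
  show ?case
  proof (cases "m \<in> cs ! Suc i")
    case True
    then obtain j where "j \<le> i" "m \<in> cs ! Suc j" "m \<notin> cs ! j" using Suc by auto
    thus ?thesis by (intro exI[of _ j]) auto
  next
    case False thus ?thesis using Suc.prems by (intro exI[of _ "Suc i"]) auto
  qed
qed

lemma Kmax:
  assumes i: "i < k"
  shows "Max (K i) = Max (cs ! Suc i)" "Max (cs ! Suc i) \<in> K i"
proof -
  let ?m = "Max (cs ! Suc i)"
  have fJ: "finite (cs ! Suc i)" using mc_fin i mc_len by simp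
  have neJ: "cs ! Suc i \<noteq> {}" using D_facts(3)[OF i] by simp
  have mJ: "?m \<in> cs ! Suc i" using fJ neJ by simp
  obtain j where j: "j \<le> i" "?m \<in> cs ! Suc j" "?m \<notin> cs ! j" using first_entry[OF mJ i] by blast
  have jk: "j < k" using j i by simp
  have "?m \<in> {a j, b j}" using D_facts(1)[OF jk] j by blast
  hence "?m \<in> K j" using K_facts(2,3)[OF jk] by auto
  moreover have KjJ: "K j \<subseteq> cs ! Suc i" using K_facts(5)[OF jk] mc_le[of "Suc j" "Suc i"] j i mc_len by auto
  ultimately have "Max (K j) = ?m"
    using fJ by (intro antisym Max_ge Max_mono) (auto intro: finite_subset)
  hence "?m \<le> Max (K i)" using Kmono2[OF j(1) i] by simp
  moreover have "Max (K i) \<le> ?m" using K_facts(2,5)[OF i] fJ by (intro Max_mono) auto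
  ultimately show e: "Max (K i) = ?m" by simp
  have "finite (K i)" "K i \<noteq> {}" using K_facts(2,5)[OF i] fJ finite_subset by auto
  thus "?m \<in> K i" using e by (metis Max_in)
qed

lemma ba_lt:
  assumes i: "Suc i < k"
  shows "b i < a (Suc i)"
proof (rule ccontr)
  assume "\<not> b i < a (Suc i)"
  hence le: "a (Suc i) \<le> b i" by simp
  have i1: "i < k" using i by simp
  have fJ: "finite (cs ! Suc i)" using mc_fin i mc_len by simp
  have bJ: "b i \<in> cs ! Suc i" using D_facts(3)[OF i1] by simp
  have "b i \<le> Max (cs ! Suc i)" using fJ bJ by simp
  moreover have "Max (cs ! Suc (Suc i)) = max (a (Suc i)) (max (b (Suc i)) (Max (cs ! Suc i)))"
  proof -
    have "cs ! Suc i \<noteq> {}" using bJ by auto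
    thus ?thesis unfolding D_facts(3)[OF i] using fJ by (simp add: Max_insert)
  qed
  ultimately have M: "Max (K (Suc i)) = Max (K i)"
    using Kmax(1)[OF i] Kmax(1)[OF i1] le D_facts(2)[OF i] by simp
  have ne: "a i \<noteq> a (Suc i)" using D_facts(3)[OF i1] D_facts(4)[OF i] by auto
  have "label_gt (Max (K i), (a i, b i)) (Max (K (Suc i)), (a (Suc i), b (Suc i)))"
    unfolding label_gt_def label_ge_def omega_ge_def using M le ne D_facts(2)[OF i1] D_facts(2)[OF i] by auto
  thus False using nd_at[OF i] by simp
qed


definition f :: "nat \<Rightarrow> nat" where "f j = (if even j then a (j div 2) else b (j div 2))"
definition ys :: "nat list" where "ys = map f [0..<2*k]"

lemma ys_len: "length ys = 2*k" unfolding ys_def by simp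

lemma ys_nth: "j < 2*k \<Longrightarrow> ys ! j = f j" unfolding ys_def by simp

lemma f_even: "f (2*i) = a i" and f_odd: "f (Suc (2*i)) = b i"
  unfolding f_def by simp_all

lemma ys_take_img: "m \<le> 2*k \<Longrightarrow> set (take m ys) = f ` {..<m}"
  unfolding ys_def by (simp add: take_map take_upt lessThan_atLeast0)

lemma ys_take: "i \<le> k \<Longrightarrow> set (take (2*i) ys) = cs ! i"
proof (induction i)
  case 0 thus ?case using mc0 by simp
next
  case (Suc i)
  have ik: "i < k" using Suc.prems by simp
  have "{..<2 * Suc i} = insert (2*i) (insert (Suc (2*i)) {..<2*i})" by auto
  hence "f ` {..<2 * Suc i} = insert (a i) (insert (b i) (f ` {..<2*i}))"
    using f_even f_odd by simp
  also have "f ` {..<2*i} = cs ! i" using Suc ys_take_img[of "2*i"] by simp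
  also have "insert (a i) (insert (b i) (cs ! i)) = cs ! Suc i" using D_facts(3)[OF ik] by simp
  finally show ?case using ys_take_img[of "2 * Suc i"] Suc.prems by simp
qed

lemma ys_take1: "i < k \<Longrightarrow> set (take (Suc (2*i)) ys) = insert (a i) (cs ! i)"
proof -
  assume ik: "i < k"
  have "{..<Suc (2*i)} = insert (2*i) {..<2*i}" by auto
  hence "set (take (Suc (2*i)) ys) = insert (f (2*i)) (f ` {..<2*i})"
    using ys_take_img[of "Suc (2*i)"] ik by simp
  also have "f ` {..<2*i} = cs ! i" using ys_take[of i] ik ys_take_img[of "2*i"] by simp
  finally show ?thesis using f_even by simp
qed

lemma ys_set: "set ys = S"
  using ys_take[of k] mc_k ys_len by simp

lemma ys_dist: "distinct ys"
  by (rule card_distinct) (simp add: ys_set ys_len cardS)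

lemma ys_alt: "alternating ys"
  unfolding alternating_def
proof (intro allI impI conjI)
  fix j assume j: "Suc j < length ys"
  define i where "i = j div 2"
  {
    assume "even j"
    hence "j = 2*i" "Suc j = Suc (2*i)" using i_def by auto
    moreover have "i < k" using j ys_len i_def by simp
    ultimately show "ys ! Suc j < ys ! j" using ys_nth j ys_len f_even f_odd D_facts(2) by simp
  }
  {
    assume "odd j"
    hence jj: "j = Suc (2*i)" "Suc j = 2 * Suc i" using i_def by presburger+
    moreover have "Suc i < k" using j ys_len jj by simp
    ultimately show "ys ! j < ys ! Suc j" using ys_nth j ys_len f_even f_odd ba_lt
      by (simp del: mult_Suc_right)
  }
qed

lemma ys_bperm: "B_perm S B ys"
  unfolding B_perm_def
proof (intro conjI allI impI)
  show "distinct ys" by (rule ys_dist)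
  show "set ys = S" by (rule ys_set)
  fix j assume j: "j < length ys"
  define i where "i = j div 2"
  have ik: "i < k" using j ys_len i_def by simp
  show "same_component (restr B (set (take (Suc j) ys))) (ys ! j) (Max (set (take (Suc j) ys)))"
    unfolding same_comp_iff
  proof (cases "even j")
    case False
    hence jj: "j = Suc (2*i)" "Suc j = 2 * Suc i" using i_def by presburger+
    have T0: "set (take (2 * Suc i) ys) = cs ! Suc i" by (rule ys_take) (use ik in simp)
    have T: "set (take (Suc j) ys) = cs ! Suc i" unfolding jj(2) by (rule T0)
    have y: "ys ! j = b i" using ys_nth j ys_len jj f_odd by simp
    show "\<exists>D\<in>B. D \<subseteq> set (take (Suc j) ys) \<and> ys ! j \<in> D \<and> Max (set (take (Suc j) ys)) \<in> D"
      unfolding T y using K_facts(3,4,5)[OF ik] Kmax(2)[OF ik] by blast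
  next
    case True
    hence jj: "j = 2*i" using i_def by simp
    have T: "set (take (Suc j) ys) = insert (a i) (cs ! i)" using ys_take1[OF ik] jj by simp
    have y: "ys ! j = a i" using ys_nth j ys_len jj f_even by simp
    let ?P = "insert (a i) (cs ! i)"
    have fP: "finite ?P" using mc_fin ik mc_len by simp
    have aS: "a i \<in> S" using D_facts(3)[OF ik] mc_sub_S[of "Suc i"] ik mc_len by auto
    show "\<exists>D\<in>B. D \<subseteq> set (take (Suc j) ys) \<and> ys ! j \<in> D \<and> Max (set (take (Suc j) ys)) \<in> D"
      unfolding T y
    proof (cases "Max ?P = a i")
      case True
      thus "\<exists>D\<in>B. D \<subseteq> ?P \<and> a i \<in> D \<and> Max ?P \<in> D" using B_sing[OF aS] by auto
    next
      case False
      let ?m = "Max ?P"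
      have mP: "?m \<in> ?P" using fP by (intro Max_in) auto
      have am: "a i < ?m" using False fP by (simp add: order.not_eq_order_implies_strict)
      have "Max (cs ! Suc i) = ?m"
      proof -
        have "cs ! Suc i = insert (b i) ?P" using D_facts(3)[OF ik] by auto
        moreover have "b i \<le> ?m" using D_facts(2)[OF ik] am by simp
        ultimately show ?thesis using fP by (simp add: Max_insert)
      qed
      hence mK: "?m \<in> K i" using Kmax(2)[OF ik] by simp
      let ?T = "{c \<in> K i. a i \<le> c}"
      have TB: "?T \<in> B" using tail[OF K_facts(4)[OF ik] K_facts(2)[OF ik]] .
      have "?T \<subseteq> ?P"
      proof
        fix c assume c: "c \<in> ?T"
        hence "c \<in> insert (a i) (insert (b i) (cs ! i))" using K_facts(5)[OF ik] D_facts(3)[OF ik] by auto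
        moreover have "c \<noteq> b i" using c D_facts(2)[OF ik] by auto
        ultimately show "c \<in> ?P" by auto
      qed
      moreover have "a i \<in> ?T" "?m \<in> ?T" using K_facts(2)[OF ik] mK am by auto
      ultimately show "\<exists>D\<in>B. D \<subseteq> ?P \<and> a i \<in> D \<and> Max ?P \<in> D" using TB by blast
    qed
  qed
qed

lemma ys_chain: "perm_to_chain ys = cs"
proof (rule nth_equalityI)
  show "length (perm_to_chain ys) = length cs" using pc_len ys_len mc_len by simp
  fix i assume "i < length (perm_to_chain ys)"
  hence i: "i < Suc k" using pc_len ys_len by simp
  thus "perm_to_chain ys ! i = cs ! i" using pc_nth[of i ys] ys_len ys_take[of i] by simp
qed

lemma surj_ex: "\<exists>xs. B_perm S B xs \<and> alternating xs \<and> perm_to_chain xs = cs"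
  using ys_bperm ys_alt ys_chain by blast

end

theorem lemma4p3:
  fixes S :: "nat set" and B :: "nat set set" and k :: nat
  assumes "finite S"
    and "building_set S B"
    and "chordal B"
    and "card S = 2 * k"
    and "\<forall>C\<in>components B. even (card C)"
  shows "bij_betw perm_to_chain
           {xs. B_perm S B xs \<and> alternating xs}
           {cs \<in> max_chains_list S B. \<not> has_decreasing_position B cs}"
proof -
  interpret cbs S B by unfold_locales (rule assms)+
  show ?thesis unfolding bij_betw_def
  proof
    show "inj_on perm_to_chain {xs. B_perm S B xs \<and> alternating xs}"
      unfolding inj_on_def using perm_inj[OF _ _ _ _ assms(4)] by blast
    show "perm_to_chain ` {xs. B_perm S B xs \<and> alternating xs}
          = {cs \<in> max_chains_list S B. \<not> has_decreasing_position B cs}"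
    proof
      show "perm_to_chain ` {xs. B_perm S B xs \<and> alternating xs}
            \<subseteq> {cs \<in> max_chains_list S B. \<not> has_decreasing_position B cs}"
      proof
        fix cs assume "cs \<in> perm_to_chain ` {xs. B_perm S B xs \<and> alternating xs}"
        then obtain xs where xs: "B_perm S B xs" "alternating xs" "cs = perm_to_chain xs" by blast
        interpret px: perm S B xs using xs(1,2) by unfold_locales
        have "length xs = 2 * k" using px.dist px.setxs assms(4) distinct_card by metis
        thus "cs \<in> {cs \<in> max_chains_list S B. \<not> has_decreasing_position B cs}"
          using px.chain_ok xs(3) by blast
      qed
      show "{cs \<in> max_chains_list S B. \<not> has_decreasing_position B cs}
            \<subseteq> perm_to_chain ` {xs. B_perm S B xs \<and> alternating xs}"
      proof
        fix cs assume cs: "cs \<in> {cs \<in> max_chains_list S B. \<not> has_decreasing_position B cs}"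
        interpret m: mainl S B k cs by unfold_locales (use assms cs in auto)
        from m.surj_ex show "cs \<in> perm_to_chain ` {xs. B_perm S B xs \<and> alternating xs}" by blast
      qed
    qed
  qed
qed

end
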